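(* Let $1\le k\le n$ and $1\le m<n$ be integers. Let $\mathcal{C}=\{d_1,\dots,d_n\}$ be a corpus of $n$ items of which exactly $m$ are designated useful (set $\mathcal{C}^+$) and the remaining $n-m$ non-useful (set $\mathcal{C}^-$). Define $\mathrm{MU}(i)=\mathbb{1}[i\le k]$ for ranks $i\in\{1,\dots,n\}$. Let $\pi$ be any probability distribution over the set $S_n$ of rankings (permutations) of $\mathcal{C}$, and let $\epsilon\in\mathbb{R}^n$ be its expected exposure vector, $\epsilon_d=\sum_{\sigma\in S_n}\pi(\sigma)\,\mathrm{MU}(\bar\sigma_d)$, where $\bar\sigma_d$ is the rank of $d$ in $\sigma$. Define the target exposure vector $\epsilon^*\in\mathbb{R}^n$ by: for useful $d\in\mathcal{C}^+$, $\epsilon^*_d=1$ if $m\le k$ and $\epsilon^*_d=k/m$ if $m>k$; for non-useful $d\in\mathcal{C}^-$, $\epsilon^*_d=\frac{k-m}{n-m}$ if $m\le k$ and $\epsilon^*_d=0$ if $m>k$. Then $$\langle \epsilon,\epsilon^*\rangle\in\big[0,\ \|\epsilon^*\|_2^2\big].$$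
   Context: $\epsilon^*$ is the expected exposure of items under an oracle stochastic retriever that always ranks all useful items above all non-useful items, uniformly at random within each group, under the top-$k$ machine-user browsing model. The quantity $\langle\epsilon,\epsilon^*\rangle$ is called the expected exposure relevance (EE-R) of the policy $\pi$. *)

theory Defs
  imports Complex_Main "HOL-Combinatorics.Permutations"
begin

text \<open>Items are d_1,...,d_n, identified with 1..n. A ranking sigma is a permutation of
  {1..n}; sigma d is the rank of item d.\<close>

definition MU :: "nat \<Rightarrow> nat \<Rightarrow> real" where
  "MU k i = (if i \<le> k then 1 else 0)"

definition rankings :: "nat \<Rightarrow> (nat \<Rightarrow> nat) set" where
  "rankings n = {\<sigma>. \<sigma> permutes {1..n}}"

definition expected_exposure :: "nat \<Rightarrow> nat \<Rightarrow> ((nat \<Rightarrow> nat) \<Rightarrow> real) \<Rightarrow> nat \<Rightarrow> real" where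
  "expected_exposure n k \<pi> d = (\<Sum>\<sigma>\<in>rankings n. \<pi> \<sigma> * MU k (\<sigma> d))"

definition target_exposure :: "nat \<Rightarrow> nat \<Rightarrow> nat set \<Rightarrow> nat \<Rightarrow> real" where
  "target_exposure n k U d =
     (let m = card U in
      if d \<in> U then (if m \<le> k then 1 else real k / real m)
      else (if m \<le> k then (real k - real m) / (real n - real m) else 0))"

end

theory Submission
  imports Defs
begin

lemma card_top:
  assumes p: "\<sigma> permutes {1..n}" and kn: "k \<le> n"
  shows "card {d\<in>{1..n}. \<sigma> d \<le> k} = k"
proof -
  have inj: "inj_on \<sigma> {d\<in>{1..n}. \<sigma> d \<le> k}"
    using permutes_inj_on[OF p] by (auto intro: inj_on_subset)
  have img: "\<sigma> ` {d\<in>{1..n}. \<sigma> d \<le> k} = {1..k}"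
  proof
    show "\<sigma> ` {d\<in>{1..n}. \<sigma> d \<le> k} \<subseteq> {1..k}"
      using permutes_image[OF p] by force
  next
    show "{1..k} \<subseteq> \<sigma> ` {d\<in>{1..n}. \<sigma> d \<le> k}"
    proof
      fix x assume x: "x \<in> {1..k}"
      then have "x \<in> {1..n}" using kn by auto
      then obtain d where "d \<in> {1..n}" "\<sigma> d = x"
        using permutes_image[OF p] by (metis imageE)
      then show "x \<in> \<sigma> ` {d\<in>{1..n}. \<sigma> d \<le> k}" using x by auto
    qed
  qed
  show ?thesis using card_image[OF inj] img by simp
qed

lemma per_sigma:
  fixes n k m :: nat and U :: "nat set"
  assumes "1 \<le> k" "k \<le> n" "1 \<le> m" "m < n"
    and U: "U \<subseteq> {1..n}" "card U = m"
    and p: "\<sigma> permutes {1..n}"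
  shows "0 \<le> (\<Sum>d\<in>{1..n}. MU k (\<sigma> d) * target_exposure n k U d)
       \<and> (\<Sum>d\<in>{1..n}. MU k (\<sigma> d) * target_exposure n k U d)
           \<le> (\<Sum>d\<in>{1..n}. (target_exposure n k U d)\<^sup>2)"
proof -
  define c1 :: real where "c1 = (if m \<le> k then 1 else real k / real m)"
  define c2 :: real where "c2 = (if m \<le> k then (real k - real m) / (real n - real m) else 0)"
  have t: "target_exposure n k U d = (if d \<in> U then c1 else c2)" for d
    unfolding target_exposure_def c1_def c2_def using U by simp
  have c1: "0 \<le> c1" unfolding c1_def by simp
  have c2: "0 \<le> c2" "c2 \<le> 1" unfolding c2_def using assms by (auto simp: field_simps)
  define A where "A = {d\<in>{1..n}. \<sigma> d \<le> k}"
  have cA: "card A = k" unfolding A_def by (rule card_top[OF p assms(2)])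
  have finA: "finite A" unfolding A_def by simp
  define a where "a = card (A \<inter> U)"
  have aU: "a \<le> m" unfolding a_def using U finite_subset[OF U(1)] by (metis card_mono finite_atLeastAtMost inf_le2)
  have aA: "a \<le> k" unfolding a_def using cA finA by (metis card_mono inf_le1)
  have cAU: "card (A - U) = k - a" unfolding a_def using cA finA
    by (metis card_Diff_subset_Int finite_Int)
  have "(\<Sum>d\<in>{1..n}. MU k (\<sigma> d) * target_exposure n k U d) = (\<Sum>d\<in>A. target_exposure n k U d)"
  proof -
    have "(\<Sum>d\<in>{1..n}. MU k (\<sigma> d) * target_exposure n k U d) = (\<Sum>d\<in>{1..n}. if \<sigma> d \<le> k then target_exposure n k U d else 0)"
      unfolding MU_def by (intro sum.cong) auto
    also have "\<dots> = (\<Sum>d\<in>A. target_exposure n k U d)"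
      unfolding A_def by (rule sum.inter_filter[symmetric]) simp
    finally show ?thesis .
  qed
  also have "\<dots> = (\<Sum>d\<in>A \<inter> U. target_exposure n k U d) + (\<Sum>d\<in>A - U. target_exposure n k U d)"
    using finA by (metis sum.Int_Diff)
  also have "\<dots> = real a * c1 + real (k - a) * c2"
    using cAU unfolding a_def t by simp
  finally have L: "(\<Sum>d\<in>{1..n}. MU k (\<sigma> d) * target_exposure n k U d) = real a * c1 + real (k - a) * c2" .
  have finU: "finite U" using finite_subset[OF U(1)] by simp
  have "(\<Sum>d\<in>{1..n}. (target_exposure n k U d)\<^sup>2) = (\<Sum>d\<in>U. (target_exposure n k U d)\<^sup>2) + (\<Sum>d\<in>{1..n} - U. (target_exposure n k U d)\<^sup>2)"
    using U(1) by (metis finite_atLeastAtMost sum.subset_diff add.commute)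
  also have "\<dots> = real m * c1^2 + real (n - m) * c2^2"
    using U finU by (simp add: t card_Diff_subset)
  finally have R: "(\<Sum>d\<in>{1..n}. (target_exposure n k U d)\<^sup>2) = real m * c1^2 + real (n - m) * c2^2" .
  have ineq: "real a * c1 + real (k - a) * c2 \<le> real m * c1^2 + real (n - m) * c2^2"
  proof (cases "m \<le> k")
    case True
    have nm: "real n - real m > 0" using assms by simp
    have e0: "(real n - real m) * c2 = real k - real m"
      using True nm by (simp add: c2_def)
    have e: "real (n - m) * c2^2 = (real k - real m) * c2"
      using assms e0 by (simp add: power2_eq_square of_nat_diff mult.assoc[symmetric])
    have "real a + (real k - real a) * c2 \<le> real m + (real k - real m) * c2"
    proof -
      have "0 \<le> (real m - real a) * (1 - c2)" using aU c2 by simp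
      then show ?thesis by (simp add: algebra_simps)
    qed
    then show ?thesis using True e aA by (simp add: c1_def of_nat_diff)
  next
    case False
    have "real a * (real k / real m) \<le> real k * (real k / real m)"
      using aA by (intro mult_right_mono) auto
    also have "\<dots> = real m * (real k / real m)^2"
      using assms by (simp add: power2_eq_square field_simps)
    finally show ?thesis using False by (simp add: c1_def c2_def)
  qed
  show ?thesis using L R ineq c1 c2 by simp
qed

theorem theorem2:
  fixes n k m :: nat and U :: "nat set" and \<pi> :: "(nat \<Rightarrow> nat) \<Rightarrow> real"
  assumes "1 \<le> k" "k \<le> n" "1 \<le> m" "m < n"
    and "U \<subseteq> {1..n}" "card U = m"
    and "\<forall>\<sigma>\<in>rankings n. 0 \<le> \<pi> \<sigma>"
    and "(\<Sum>\<sigma>\<in>rankings n. \<pi> \<sigma>) = 1"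
  shows "0 \<le> (\<Sum>d\<in>{1..n}. expected_exposure n k \<pi> d * target_exposure n k U d)
       \<and> (\<Sum>d\<in>{1..n}. expected_exposure n k \<pi> d * target_exposure n k U d)
           \<le> (\<Sum>d\<in>{1..n}. (target_exposure n k U d)\<^sup>2)"
proof -
  let ?S = "\<lambda>\<sigma>. (\<Sum>d\<in>{1..n}. MU k (\<sigma> d) * target_exposure n k U d)"
  let ?T = "(\<Sum>d\<in>{1..n}. (target_exposure n k U d)\<^sup>2)"
  have fin: "finite (rankings n)" unfolding rankings_def
    using finite_permutations[of "{1..n}"] by simp
  have eq: "(\<Sum>d\<in>{1..n}. expected_exposure n k \<pi> d * target_exposure n k U d)
      = (\<Sum>\<sigma>\<in>rankings n. \<pi> \<sigma> * ?S \<sigma>)"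
    unfolding expected_exposure_def
    by (simp add: sum_distrib_left sum_distrib_right mult.assoc) (rule sum.swap)
  have b: "0 \<le> ?S \<sigma> \<and> ?S \<sigma> \<le> ?T" if "\<sigma> \<in> rankings n" for \<sigma>
    using per_sigma[OF assms(1-6)] that unfolding rankings_def by simp
  have "0 \<le> (\<Sum>\<sigma>\<in>rankings n. \<pi> \<sigma> * ?S \<sigma>)"
    using b assms(7) by (intro sum_nonneg) auto
  moreover have "(\<Sum>\<sigma>\<in>rankings n. \<pi> \<sigma> * ?S \<sigma>) \<le> (\<Sum>\<sigma>\<in>rankings n. \<pi> \<sigma> * ?T)"
    using b assms(7) by (intro sum_mono) (simp add: mult_left_mono)
  moreover have "(\<Sum>\<sigma>\<in>rankings n. \<pi> \<sigma> * ?T) = ?T"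
    using assms(8) by (simp add: sum_distrib_right[symmetric])
  ultimately show ?thesis using eq by simp
qed

end
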